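(* Let $r=r(n)\ge3$ and $m=m(n)$ be integers with $r=o(n^{1/2})$ and $1\le m=O(\log(r^{-2}n))$. Let $\mathcal{H}^+_r(n,m)$ be the set of $H\in\mathcal{H}_r(n,m)$ such that: (a) any two edges share at most two vertices; (b) every cluster consists of exactly two edges; (c) any two distinct clusters are vertex-disjoint; (d) there are at most two clusters. Then, as $n\to\infty$, \[ \frac{|\mathcal{H}^+_r(n,m)|}{|\mathcal{H}_r(n,m)|}=1-O\Bigl(\frac{r^6m^2}{n^3}\Bigr). \]
   Context: $\mathcal{H}_r(n,m)$ is the set of $r$-uniform hypergraphs on $[n]$ with exactly $m$ edges. Two edges are linked if they share exactly two vertices; with $G_H$ the graph on the edges of $H$ whose adjacency is linkedness, a cluster of $H$ is the sub-hypergraph formed by the edges of a connected component of $G_H$ with at least two vertices. $\log$ is natural. *)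

theory Defs
  imports "HOL-Analysis.Analysis" "HOL-Library.Landau_Symbols"
begin

definition hypergraphs :: "nat \<Rightarrow> nat \<Rightarrow> nat \<Rightarrow> nat set set set" where
  "hypergraphs r n m = {H. H \<subseteq> {e. e \<subseteq> {1..n} \<and> card e = r} \<and> card H = m}"

text \<open>Two edges are linked if they share exactly two vertices (adjacency of G_H).\<close>
definition linked :: "nat set set \<Rightarrow> (nat set \<times> nat set) set" where
  "linked H = {(e, f). e \<in> H \<and> f \<in> H \<and> e \<noteq> f \<and> card (e \<inter> f) = 2}"

definition components :: "nat set set \<Rightarrow> nat set set set" where
  "components H = {{f \<in> H. (e, f) \<in> (linked H)\<^sup>*} | e. e \<in> H}"

definition clusters :: "nat set set \<Rightarrow> nat set set set" where
  "clusters H = {C \<in> components H. card C \<ge> 2}"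

definition good_hypergraphs :: "nat \<Rightarrow> nat \<Rightarrow> nat \<Rightarrow> nat set set set" where
  "good_hypergraphs r n m = {H \<in> hypergraphs r n m.
      (\<forall>e\<in>H. \<forall>f\<in>H. e \<noteq> f \<longrightarrow> card (e \<inter> f) \<le> 2) \<and>
      (\<forall>C\<in>clusters H. card C = 2) \<and>
      (\<forall>C1\<in>clusters H. \<forall>C2\<in>clusters H. C1 \<noteq> C2 \<longrightarrow> \<Union>C1 \<inter> \<Union>C2 = {}) \<and>
      card (clusters H) \<le> 2}"

end

theory Submission
  imports Defs
begin



lemma binom_ratio:
  "k \<le> m \<Longrightarrow> m \<le> N \<Longrightarrow> real ((N - k) choose (m - k)) \<le> (real m / real N)^k * real (N choose m)"
proof (induction k arbitrary: N m)
  case 0 then show ?case by simp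
next
  case (Suc k)
  obtain N' where N: "N = Suc N'" using Suc.prems by (cases N) auto
  obtain m' where m: "m = Suc m'" using Suc.prems by (cases m) auto
  have IH: "real ((N' - k) choose (m' - k)) \<le> (real m' / real N')^k * real (N' choose m')"
    using Suc.IH[of m' N'] Suc.prems N m by simp
  have id: "real (N' choose m') = real m / real N * real (N choose m)"
  proof -
    have "real (Suc N') * real (N' choose m') = real (Suc N' choose Suc m') * real (Suc m')"
      using Suc_times_binomial_eq[of N' m'] by (metis of_nat_mult)
    then show ?thesis using N m by (simp add: field_simps)
  qed
  have le: "real m' / real N' \<le> real m / real N"
  proof (cases "N' = 0")
    case True then show ?thesis by simp
  next
    case False
    then show ?thesis using Suc.prems N m by (simp add: field_simps)
  qed
  have "real ((N - Suc k) choose (m - Suc k)) = real ((N' - k) choose (m' - k))" using N m by simp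
  also have "\<dots> \<le> (real m' / real N')^k * real (N' choose m')" by (rule IH)
  also have "\<dots> \<le> (real m / real N)^k * real (N' choose m')"
    by (intro mult_right_mono power_mono le) auto
  also have "\<dots> = (real m / real N)^Suc k * real (N choose m)" using id by simp
  finally show ?case .
qed

lemma card_supersets:
  assumes U: "finite U" "S \<subseteq> U" "card S = k"
  shows "real (card {H. H \<subseteq> U \<and> card H = m \<and> S \<subseteq> H}) \<le> (real m / real (card U))^k * real (card U choose m)"
proof (cases "k \<le> m \<and> m \<le> card U")
  case False
  have E: "{H. H \<subseteq> U \<and> card H = m \<and> S \<subseteq> H} = {}"
  proof (rule ccontr)
    assume "{H. H \<subseteq> U \<and> card H = m \<and> S \<subseteq> H} \<noteq> {}"
    then obtain H where H: "H \<subseteq> U" "card H = m" "S \<subseteq> H" by blast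
    have "card S \<le> card H" using H U finite_subset card_mono by metis
    moreover have "card H \<le> card U" using H U card_mono by metis
    ultimately show False using False H U by simp
  qed
  show ?thesis unfolding E by simp
next
  case True
  have fS: "finite S" using U finite_subset by blast
  have sub: "{H. H \<subseteq> U \<and> card H = m \<and> S \<subseteq> H} \<subseteq> (\<lambda>R. S \<union> R) ` {R. R \<subseteq> U - S \<and> card R = m - k}"
  proof
    fix H assume H: "H \<in> {H. H \<subseteq> U \<and> card H = m \<and> S \<subseteq> H}"
    have "finite H" using H U finite_subset by blast
    then have "card (H - S) = m - k" using H U by (simp add: card_Diff_subset fS)
    moreover have "H = S \<union> (H - S)" using H by blast
    ultimately show "H \<in> (\<lambda>R. S \<union> R) ` {R. R \<subseteq> U - S \<and> card R = m - k}" using H by blast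
  qed
  have "card {H. H \<subseteq> U \<and> card H = m \<and> S \<subseteq> H} \<le> card {R. R \<subseteq> U - S \<and> card R = m - k}"
  proof -
    have f: "finite {R. R \<subseteq> U - S \<and> card R = m - k}" using U(1) by simp
    show ?thesis by (rule order_trans[OF card_mono[OF finite_imageI[OF f] sub] card_image_le[OF f]])
  qed
  also have "\<dots> = (card U - k) choose (m - k)"
    using U by (simp add: n_subsets card_Diff_subset fS)
  finally show ?thesis using binom_ratio[of k m "card U"] True
    by (meson of_nat_le_iff order_trans)
qed




lemma card_with_subset:
  assumes V: "finite V" "T \<subseteq> V" "card T = k"
  shows "card {f. f \<subseteq> V \<and> card f = r \<and> T \<subseteq> f} \<le> (card V - k) choose (r - k)"
proof -
  have fT: "finite T" using V finite_subset by blast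
  have sub: "{f. f \<subseteq> V \<and> card f = r \<and> T \<subseteq> f} \<subseteq> (\<lambda>R. T \<union> R) ` {R. R \<subseteq> V - T \<and> card R = r - k}"
  proof
    fix H assume H: "H \<in> {f. f \<subseteq> V \<and> card f = r \<and> T \<subseteq> f}"
    have "finite H" using H V finite_subset by blast
    then have "card (H - T) = r - k" using H V by (simp add: card_Diff_subset fT)
    moreover have "H = T \<union> (H - T)" using H by blast
    ultimately show "H \<in> (\<lambda>R. T \<union> R) ` {R. R \<subseteq> V - T \<and> card R = r - k}" using H by blast
  qed
  have f: "finite {R. R \<subseteq> V - T \<and> card R = r - k}" using V(1) by simp
  have "card {f. f \<subseteq> V \<and> card f = r \<and> T \<subseteq> f} \<le> card {R. R \<subseteq> V - T \<and> card R = r - k}"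
    by (rule order_trans[OF card_mono[OF finite_imageI[OF f] sub] card_image_le[OF f]])
  also have "\<dots> = (card V - k) choose (r - k)"
    using V by (simp add: n_subsets card_Diff_subset fT)
  finally show ?thesis .
qed

lemma card_overlap:
  assumes V: "finite V" "e \<subseteq> V" "card e = r"
  shows "card {f. f \<subseteq> V \<and> card f = r \<and> k \<le> card (e \<inter> f)} \<le> (r choose k) * ((card V - k) choose (r - k))"
proof -
  have fe: "finite e" using V finite_subset by blast
  let ?Ts = "{T. T \<subseteq> e \<and> card T = k}"
  have fTs: "finite ?Ts" using fe by simp
  have sub: "{f. f \<subseteq> V \<and> card f = r \<and> k \<le> card (e \<inter> f)} \<subseteq> (\<Union>T\<in>?Ts. {f. f \<subseteq> V \<and> card f = r \<and> T \<subseteq> f})"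
  proof
    fix f assume f: "f \<in> {f. f \<subseteq> V \<and> card f = r \<and> k \<le> card (e \<inter> f)}"
    then obtain T where "T \<subseteq> e \<inter> f" "card T = k" using obtain_subset_with_card_n by blast
    then show "f \<in> (\<Union>T\<in>?Ts. {f. f \<subseteq> V \<and> card f = r \<and> T \<subseteq> f})" using f by blast
  qed
  have fin: "finite (\<Union>T\<in>?Ts. {f. f \<subseteq> V \<and> card f = r \<and> T \<subseteq> f})" using V(1) fTs by auto
  have "card {f. f \<subseteq> V \<and> card f = r \<and> k \<le> card (e \<inter> f)} \<le> card (\<Union>T\<in>?Ts. {f. f \<subseteq> V \<and> card f = r \<and> T \<subseteq> f})"
    by (rule card_mono[OF fin sub])
  also have "\<dots> \<le> (\<Sum>T\<in>?Ts. card {f. f \<subseteq> V \<and> card f = r \<and> T \<subseteq> f})" by (rule card_UN_le[OF fTs])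
  also have "\<dots> \<le> (\<Sum>T\<in>?Ts. (card V - k) choose (r - k))"
  proof (rule sum_mono)
    fix T assume "T \<in> ?Ts"
    then show "card {f. f \<subseteq> V \<and> card f = r \<and> T \<subseteq> f} \<le> (card V - k) choose (r - k)"
      using card_with_subset[of V T k r] V by blast
  qed
  also have "\<dots> = (r choose k) * ((card V - k) choose (r - k))" using fe V by (simp add: n_subsets)
  finally show ?thesis .
qed




lemma good_if_no_bad:
  assumes H: "H \<in> hypergraphs r n m"
    and no1: "\<forall>e\<in>H. \<forall>f\<in>H. e \<noteq> f \<longrightarrow> card (e \<inter> f) \<le> 2"
    and no2: "\<not>(\<exists>e1 e2 e3. e1\<in>H \<and> e2\<in>H \<and> e3\<in>H \<and> e1\<noteq>e2 \<and> e2\<noteq>e3 \<and> e1\<noteq>e3 \<and>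
                 2 \<le> card (e1\<inter>e2) \<and> 2 \<le> card (e2\<inter>e3))"
    and no3: "\<not>(\<exists>e1 e2 e3 e4. e1\<in>H \<and> e2\<in>H \<and> e3\<in>H \<and> e4\<in>H \<and> e1\<noteq>e2 \<and> e1\<noteq>e3 \<and> e1\<noteq>e4 \<and>
                 e2\<noteq>e3 \<and> e2\<noteq>e4 \<and> e3\<noteq>e4 \<and> 2 \<le> card (e1\<inter>e2) \<and> 2 \<le> card (e3\<inter>e4))"
  shows "H \<in> good_hypergraphs r n m"
proof -
  have finH: "finite H"
  proof -
    have "H \<subseteq> Pow {1..n}" using H unfolding hypergraphs_def by auto
    then show ?thesis by (rule finite_subset) simp
  qed
  obtain a b where ab: "a \<noteq> b" "linked H \<subseteq> {(a,b),(b,a)}"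
  proof (cases "linked H = {}")
    case True
    show ?thesis by (rule that[of "{}" "{0}"]) (use True in auto)
  next
    case False
    then obtain a b where l: "(a,b) \<in> linked H" by auto
    then have a: "a \<in> H" "b \<in> H" "a \<noteq> b" "card (a \<inter> b) = 2" unfolding linked_def by auto
    have "linked H \<subseteq> {(a,b),(b,a)}"
    proof
      fix p assume "p \<in> linked H"
      then obtain c d where p: "p = (c,d)" "c \<in> H" "d \<in> H" "c \<noteq> d" "card (c \<inter> d) = 2"
        unfolding linked_def by auto
      have cm: "card (x \<inter> y) = card (y \<inter> x)" for x y :: "nat set" by (simp add: Int_commute)
      show "p \<in> {(a,b),(b,a)}"
      proof (rule ccontr)
        assume nt: "p \<notin> {(a,b),(b,a)}"
        show False
        proof (cases "c = a \<or> c = b \<or> d = a \<or> d = b")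
          case True
          then show False using no2 a p nt cm by (smt (verit) insertCI le_refl)
        next
          case False
          then show False using no3 a p by (metis le_refl)
        qed
      qed
    qed
    then show ?thesis using that a by blast
  qed
  define R where "R = Id \<union> {(a,b),(b,a)}"
  have rt: "(e,f) \<in> R" if "(e,f) \<in> (linked H)\<^sup>*" for e f
    using that
  proof (induction rule: rtrancl_induct)
    case base then show ?case by (simp add: R_def)
  next
    case (step y z)
    then show ?case using ab unfolding R_def by auto
  qed
  have cl: "clusters H \<subseteq> {{a,b}}"
  proof
    fix C assume "C \<in> clusters H"
    then obtain e where e: "C = {f \<in> H. (e, f) \<in> (linked H)\<^sup>*}" "card C \<ge> 2"
      unfolding clusters_def components_def by auto
    have CR: "C \<subseteq> {f. (e,f) \<in> R}" using e rt by auto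
    have "e \<in> {a,b}"
    proof (rule ccontr)
      assume "e \<notin> {a,b}"
      then have "C \<subseteq> {e}" using CR unfolding R_def by auto
      then have "card C \<le> 1" by (metis card.empty card_insert_disjoint card_mono empty_iff finite.intros(1) finite_insert le_numeral_extra(4) One_nat_def)
      then show False using e by simp
    qed
    then have "C \<subseteq> {a,b}" using CR unfolding R_def by auto
    moreover have "card {a,b} = 2" using ab by simp
    ultimately have "C = {a,b}" using e by (metis card_subset_eq finite.emptyI finite_insert antisym card_mono)
    then show "C \<in> {{a,b}}" by simp
  qed
  have "card (clusters H) \<le> 1"
    using cl by (metis card.empty card_insert_disjoint card_mono empty_iff finite.intros(1) finite_insert One_nat_def order_refl)
  moreover have "\<forall>C\<in>clusters H. card C = 2"
  proof
    fix C assume "C \<in> clusters H"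
    then have "C = {a,b}" using cl by blast
    then show "card C = 2" using ab(1) by simp
  qed
  moreover have "\<forall>C1\<in>clusters H. \<forall>C2\<in>clusters H. C1 \<noteq> C2 \<longrightarrow> \<Union>C1 \<inter> \<Union>C2 = {}" using cl by auto
  ultimately show ?thesis using H no1 unfolding good_hypergraphs_def by auto
qed




lemma card_union_supersets:
  assumes U: "finite U" and T: "finite T" and S: "\<And>t. t \<in> T \<Longrightarrow> S t \<subseteq> U \<and> card (S t) = k"
  shows "real (card (\<Union>t\<in>T. {H. H \<subseteq> U \<and> card H = m \<and> S t \<subseteq> H}))
           \<le> real (card T) * ((real m / real (card U))^k * real (card U choose m))"
proof -
  have "card (\<Union>t\<in>T. {H. H \<subseteq> U \<and> card H = m \<and> S t \<subseteq> H}) \<le> (\<Sum>t\<in>T. card {H. H \<subseteq> U \<and> card H = m \<and> S t \<subseteq> H})"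
    by (rule card_UN_le[OF T])
  then have "real (card (\<Union>t\<in>T. {H. H \<subseteq> U \<and> card H = m \<and> S t \<subseteq> H})) \<le> (\<Sum>t\<in>T. real (card {H. H \<subseteq> U \<and> card H = m \<and> S t \<subseteq> H}))"
    unfolding of_nat_sum[symmetric] of_nat_le_iff .
  also have "\<dots> \<le> (\<Sum>t\<in>T. (real m / real (card U))^k * real (card U choose m))"
    by (rule sum_mono) (use card_supersets[OF U] S in blast)
  also have "\<dots> = real (card T) * ((real m / real (card U))^k * real (card U choose m))" by simp
  finally show ?thesis .
qed

lemma card_Sigma_le:
  assumes "finite A" "\<And>a. a \<in> A \<Longrightarrow> finite (B a)" "\<And>a. a \<in> A \<Longrightarrow> real (card (B a)) \<le> K"
  shows "real (card (Sigma A B)) \<le> real (card A) * K"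
proof -
  have "real (card (Sigma A B)) = (\<Sum>a\<in>A. real (card (B a)))" using assms by simp
  also have "\<dots> \<le> (\<Sum>a\<in>A. K)" by (rule sum_mono) (use assms in auto)
  also have "\<dots> = real (card A) * K" by simp
  finally show ?thesis .
qed

definition Ov :: "nat \<Rightarrow> nat \<Rightarrow> nat \<Rightarrow> nat set \<Rightarrow> nat set set" where
  "Ov n r k e = {f. f \<subseteq> {1..n} \<and> card f = r \<and> k \<le> card (e \<inter> f)}"

lemma Ov_finite: "finite (Ov n r k e)"
  unfolding Ov_def by (rule finite_subset[of _ "Pow {1..n}"]) auto

lemma Ov_card:
  assumes "e \<subseteq> {1..n}" "card e = r" "k \<le> r" "r \<le> n"
  shows "real (card (Ov n r k e)) \<le> real r ^ k * (real r / real n)^k * real (n choose r)"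
proof -
  have "card (Ov n r k e) \<le> (r choose k) * ((n - k) choose (r - k))"
    using card_overlap[of "{1..n}" e r k] assms unfolding Ov_def by simp
  then have "real (card (Ov n r k e)) \<le> real (r choose k) * real ((n - k) choose (r - k))"
    by (metis of_nat_le_iff of_nat_mult)
  also have "\<dots> \<le> real r ^ k * ((real r / real n)^k * real (n choose r))"
  proof (rule mult_mono)
    show "real (r choose k) \<le> real r ^ k" using binomial_le_pow[OF assms(3)] by (metis of_nat_le_iff of_nat_power)
    show "real ((n - k) choose (r - k)) \<le> (real r / real n)^k * real (n choose r)"
      by (rule binom_ratio) (use assms in auto)
  qed auto
  finally show ?thesis by simp
qed




lemma bad_count:
  fixes n r m :: nat
  assumes rn: "3 \<le> r" "r \<le> n"
  defines "N \<equiv> n choose r"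
  assumes Npos: "0 < N"
  shows "real (card (hypergraphs r n m - good_hypergraphs r n m))
    \<le> (real r ^ 3 * (real r / real n)^3 * real m ^ 2 + real r ^ 4 * (real r / real n)^4 * real m ^ 3
        + real r ^ 4 * (real r / real n)^4 * real m ^ 4) * real (N choose m)"
proof -
  define U where "U = {e. e \<subseteq> {1..n} \<and> card e = r}"
  have finU: "finite U" unfolding U_def by (rule finite_subset[of _ "Pow {1..n}"]) auto
  have cardU: "card U = N" unfolding U_def N_def using n_subsets[of "{1..n}" r] by simp
  have hyp: "hypergraphs r n m = {H. H \<subseteq> U \<and> card H = m}" unfolding hypergraphs_def U_def by simp
  define a where "a = real (N choose m)"
  define \<alpha> where "\<alpha> = (\<lambda>k. real r ^ k * (real r / real n)^k * real N)"
  have Ovc: "real (card (Ov n r k e)) \<le> \<alpha> k" if "e \<in> U" "k \<le> r" for e k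
    using Ov_card[of e n r k] that rn unfolding U_def \<alpha>_def N_def by simp
  have a0: "\<alpha> k \<ge> 0" for k unfolding \<alpha>_def by simp
  define P2 where "P2 = Sigma U (Ov n r 2)"
  have finP2: "finite P2" unfolding P2_def using finU Ov_finite by blast
  have cP2: "real (card P2) \<le> real N * \<alpha> 2"
    unfolding P2_def using card_Sigma_le[of U "Ov n r 2" "\<alpha> 2"] finU Ov_finite Ovc rn cardU by simp
  define T1 where "T1 = {p \<in> Sigma U (Ov n r 3). fst p \<noteq> snd p}"
  define T2 where "T2 = {q \<in> Sigma P2 (\<lambda>p. Ov n r 2 (snd p)). fst (fst q) \<noteq> snd (fst q) \<and> snd (fst q) \<noteq> snd q \<and> fst (fst q) \<noteq> snd q}"
  define T3 where "T3 = {q \<in> P2 \<times> P2. card {fst (fst q), snd (fst q), fst (snd q), snd (snd q)} = 4}"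
  define S1 where "S1 = (\<lambda>p::nat set \<times> nat set. {fst p, snd p})"
  define S2 where "S2 = (\<lambda>q::(nat set \<times> nat set) \<times> nat set. {fst (fst q), snd (fst q), snd q})"
  define S3 where "S3 = (\<lambda>q::(nat set \<times> nat set) \<times> (nat set \<times> nat set). {fst (fst q), snd (fst q), fst (snd q), snd (snd q)})"
  have finT1: "finite T1" unfolding T1_def using finU Ov_finite by auto
  have finT2: "finite T2" unfolding T2_def using finP2 Ov_finite by auto
  have finT3: "finite T3" unfolding T3_def using finP2 by auto
  have cT1: "real (card T1) \<le> real N * \<alpha> 3"
  proof -
    have "card T1 \<le> card (Sigma U (Ov n r 3))" unfolding T1_def
      by (rule card_mono) (use finU Ov_finite in auto)
    then have "real (card T1) \<le> real (card (Sigma U (Ov n r 3)))" by simp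
    also have "\<dots> \<le> real (card U) * \<alpha> 3" using card_Sigma_le[of U "Ov n r 3" "\<alpha> 3"] finU Ov_finite Ovc rn by simp
    finally show ?thesis using cardU by simp
  qed
  have cT2: "real (card T2) \<le> (real N * \<alpha> 2) * \<alpha> 2"
  proof -
    have "card T2 \<le> card (Sigma P2 (\<lambda>p. Ov n r 2 (snd p)))" unfolding T2_def
      by (rule card_mono) (use finP2 Ov_finite in auto)
    then have "real (card T2) \<le> real (card (Sigma P2 (\<lambda>p. Ov n r 2 (snd p))))" by simp
    also have "\<dots> \<le> real (card P2) * \<alpha> 2"
    proof (rule card_Sigma_le[OF finP2])
      show "finite (Ov n r 2 (snd p))" for p by (rule Ov_finite)
    next
      fix p assume "p \<in> P2"
      then have "snd p \<in> U" unfolding P2_def Ov_def U_def by auto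
      then show "real (card (Ov n r 2 (snd p))) \<le> \<alpha> 2" using Ovc rn by simp
    qed
    also have "\<dots> \<le> (real N * \<alpha> 2) * \<alpha> 2" by (rule mult_right_mono[OF cP2 a0])
    finally show ?thesis .
  qed
  have cT3: "real (card T3) \<le> (real N * \<alpha> 2) * (real N * \<alpha> 2)"
  proof -
    have "card T3 \<le> card (P2 \<times> P2)" unfolding T3_def
      by (rule card_mono) (use finP2 in auto)
    then have "real (card T3) \<le> real (card P2) * real (card P2)" by (simp add: card_cartesian_product) (metis of_nat_le_iff of_nat_mult)
    also have "\<dots> \<le> (real N * \<alpha> 2) * (real N * \<alpha> 2)" by (rule mult_mono[OF cP2 cP2]) (use a0 in auto)
    finally show ?thesis .
  qed
  define B1 where "B1 = (\<Union>t\<in>T1. {H. H \<subseteq> U \<and> card H = m \<and> S1 t \<subseteq> H})"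
  define B2 where "B2 = (\<Union>t\<in>T2. {H. H \<subseteq> U \<and> card H = m \<and> S2 t \<subseteq> H})"
  define B3 where "B3 = (\<Union>t\<in>T3. {H. H \<subseteq> U \<and> card H = m \<and> S3 t \<subseteq> H})"
  have S1ok: "S1 t \<subseteq> U \<and> card (S1 t) = 2" if "t \<in> T1" for t
    using that unfolding T1_def S1_def Ov_def U_def by auto
  have S2ok: "S2 t \<subseteq> U \<and> card (S2 t) = 3" if "t \<in> T2" for t
    using that unfolding T2_def S2_def P2_def Ov_def U_def by auto
  have S3ok: "S3 t \<subseteq> U \<and> card (S3 t) = 4" if "t \<in> T3" for t
    using that unfolding T3_def S3_def P2_def Ov_def U_def by auto
  have b1: "real (card (B1)) \<le> real (card T1) * ((real m / real N)^2 * a)"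
    unfolding B1_def a_def using card_union_supersets[OF finU finT1 S1ok] cardU by simp
  have b2: "real (card (B2)) \<le> real (card T2) * ((real m / real N)^3 * a)"
    unfolding B2_def a_def using card_union_supersets[OF finU finT2 S2ok] cardU by simp
  have b3: "real (card (B3)) \<le> real (card T3) * ((real m / real N)^4 * a)"
    unfolding B3_def a_def using card_union_supersets[OF finU finT3 S3ok] cardU by simp
  have sub: "hypergraphs r n m - good_hypergraphs r n m \<subseteq> B1 \<union> B2 \<union> B3"
  proof
    fix H assume H: "H \<in> hypergraphs r n m - good_hypergraphs r n m"
    then have HU: "H \<subseteq> U" "card H = m" using hyp by auto
    have inU: "e \<in> H \<Longrightarrow> e \<subseteq> {1..n} \<and> card e = r" for e using HU unfolding U_def by auto
    consider (c1) "\<not> (\<forall>e\<in>H. \<forall>f\<in>H. e \<noteq> f \<longrightarrow> card (e \<inter> f) \<le> 2)"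
      | (c2) "\<exists>e1 e2 e3. e1\<in>H \<and> e2\<in>H \<and> e3\<in>H \<and> e1\<noteq>e2 \<and> e2\<noteq>e3 \<and> e1\<noteq>e3 \<and>
                 2 \<le> card (e1\<inter>e2) \<and> 2 \<le> card (e2\<inter>e3)"
      | (c3) "\<exists>e1 e2 e3 e4. e1\<in>H \<and> e2\<in>H \<and> e3\<in>H \<and> e4\<in>H \<and> e1\<noteq>e2 \<and> e1\<noteq>e3 \<and> e1\<noteq>e4 \<and>
                 e2\<noteq>e3 \<and> e2\<noteq>e4 \<and> e3\<noteq>e4 \<and> 2 \<le> card (e1\<inter>e2) \<and> 2 \<le> card (e3\<inter>e4)"
      using good_if_no_bad[of H r n m] H by blast
    then show "H \<in> B1 \<union> B2 \<union> B3"
    proof cases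
      case c1
      then obtain e f where ef: "e \<in> H" "f \<in> H" "e \<noteq> f" "3 \<le> card (e \<inter> f)" by force
      have "(e,f) \<in> T1" unfolding T1_def Ov_def using ef inU HU by auto
      moreover have "H \<in> {H'. H' \<subseteq> U \<and> card H' = m \<and> S1 (e,f) \<subseteq> H'}" using HU ef unfolding S1_def by auto
      ultimately show ?thesis unfolding B1_def by blast
    next
      case c2
      then obtain e1 e2 e3 where ef: "e1\<in>H" "e2\<in>H" "e3\<in>H" "e1\<noteq>e2" "e2\<noteq>e3" "e1\<noteq>e3"
                 "2 \<le> card (e1\<inter>e2)" "2 \<le> card (e2\<inter>e3)" by blast
      have "((e1,e2),e3) \<in> T2" unfolding T2_def P2_def Ov_def using ef inU HU by auto
      moreover have "H \<in> {H'. H' \<subseteq> U \<and> card H' = m \<and> S2 ((e1,e2),e3) \<subseteq> H'}" using HU ef unfolding S2_def by auto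
      ultimately show ?thesis unfolding B2_def by blast
    next
      case c3
      then obtain e1 e2 e3 e4 where ef: "e1\<in>H" "e2\<in>H" "e3\<in>H" "e4\<in>H" "e1\<noteq>e2" "e1\<noteq>e3" "e1\<noteq>e4"
                 "e2\<noteq>e3" "e2\<noteq>e4" "e3\<noteq>e4" "2 \<le> card (e1\<inter>e2)" "2 \<le> card (e3\<inter>e4)" by blast
      have "((e1,e2),(e3,e4)) \<in> T3" unfolding T3_def P2_def Ov_def using ef inU HU by auto
      moreover have "H \<in> {H'. H' \<subseteq> U \<and> card H' = m \<and> S3 ((e1,e2),(e3,e4)) \<subseteq> H'}" using HU ef unfolding S3_def by auto
      ultimately show ?thesis unfolding B3_def by blast
    qed
  qed
  have finB: "finite (B1 \<union> B2 \<union> B3)"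
    unfolding B1_def B2_def B3_def by (rule finite_subset[of _ "Pow U"]) (use finU in auto)
  have "card (hypergraphs r n m - good_hypergraphs r n m) \<le> card (B1 \<union> B2 \<union> B3)"
    by (rule card_mono[OF finB sub])
  also have "\<dots> \<le> card B1 + card B2 + card B3"
    by (metis add_le_mono card_Un_le le_refl order_trans)
  finally have tot: "real (card (hypergraphs r n m - good_hypergraphs r n m)) \<le> real (card B1) + real (card B2) + real (card B3)"
    by (metis of_nat_add of_nat_le_iff)
  have apos: "a \<ge> 0" unfolding a_def by simp
  have Nr: "real N > 0" using Npos by simp
  have e1: "real (card B1) \<le> real r ^ 3 * (real r / real n)^3 * real m ^ 2 * a"
  proof -
    have "real (card B1) \<le> (real N * \<alpha> 3) * ((real m / real N)^2 * a)"
      using b1 cT1 by (meson apos mult_right_mono order_trans zero_le_divide_iff zero_le_power of_nat_0_le_iff mult_nonneg_nonneg)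
    also have "\<dots> = real r ^ 3 * (real r / real n)^3 * real m ^ 2 * a"
      unfolding \<alpha>_def using Nr by (simp add: power2_eq_square field_simps)
    finally show ?thesis .
  qed
  have e2: "real (card B2) \<le> real r ^ 4 * (real r / real n)^4 * real m ^ 3 * a"
  proof -
    have "real (card B2) \<le> ((real N * \<alpha> 2) * \<alpha> 2) * ((real m / real N)^3 * a)"
      using b2 cT2 by (meson apos mult_right_mono order_trans zero_le_divide_iff zero_le_power of_nat_0_le_iff mult_nonneg_nonneg)
    also have "\<dots> = real r ^ 4 * (real r / real n)^4 * real m ^ 3 * a"
      unfolding \<alpha>_def using Nr by (simp add: power2_eq_square power3_eq_cube field_simps) (simp add: eval_nat_numeral ac_simps)
    finally show ?thesis .
  qed
  have e3: "real (card B3) \<le> real r ^ 4 * (real r / real n)^4 * real m ^ 4 * a"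
  proof -
    have "real (card B3) \<le> ((real N * \<alpha> 2) * (real N * \<alpha> 2)) * ((real m / real N)^4 * a)"
      using b3 cT3 by (meson apos mult_right_mono order_trans zero_le_divide_iff zero_le_power of_nat_0_le_iff mult_nonneg_nonneg)
    also have "\<dots> = (real r ^ 2 * (real r / real n)^2)^2 * (real N * (real m / real N))^4 * a"
      unfolding \<alpha>_def by (simp add: eval_nat_numeral algebra_simps)
    also have "real N * (real m / real N) = real m" using Nr by simp
    also have "(real r ^ 2 * (real r / real n)^2)^2 * (real m)^4 * a = real r ^ 4 * (real r / real n)^4 * real m ^ 4 * a"
      by (simp add: eval_nat_numeral algebra_simps)
    finally show ?thesis .
  qed
  show ?thesis using tot e1 e2 e3 unfolding a_def by (simp add: algebra_simps)
qed




lemma card_hyp: "card (hypergraphs r n m) = (n choose r) choose m"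
proof -
  define U where "U = {e. e \<subseteq> {1..n} \<and> card e = r}"
  have finU: "finite U" unfolding U_def by (rule finite_subset[of _ "Pow {1..n}"]) auto
  have cardU: "card U = n choose r" unfolding U_def using n_subsets[of "{1..n}" r] by simp
  have hyp: "hypergraphs r n m = {H. H \<subseteq> U \<and> card H = m}" unfolding hypergraphs_def U_def by simp
  show ?thesis unfolding hyp using n_subsets[OF finU, of m] cardU by simp
qed

lemma ln_sq_le: "(x::real) \<ge> 1 \<Longrightarrow> (ln x)^2 \<le> 4 * x"
proof -
  assume x: "x \<ge> 1"
  have s: "sqrt x > 0" using x by simp
  have "ln x = 2 * ln (sqrt x)" using x by (simp add: ln_sqrt)
  also have "\<dots> \<le> 2 * (sqrt x - 1)" using ln_le_minus_one[OF s] by simp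
  finally have l: "ln x \<le> 2 * sqrt x" by simp
  have l0: "ln x \<ge> 0" using x by simp
  have "(ln x)^2 \<le> (2 * sqrt x)^2" using power_mono[OF l l0] .
  also have "\<dots> = 4 * x" using x by (simp add: power_mult_distrib)
  finally show ?thesis .
qed

lemma pointwise:
  fixes r m n :: nat and C :: real
  assumes r3: "r \<ge> 3" and m1: "m \<ge> 1" and rs: "real r \<le> sqrt (real n)"
    and mC: "real m \<le> C * \<bar>ln (real n / (real r)\<^sup>2)\<bar>" and C: "C > 0" and nC: "real n \<ge> C"
  shows "\<bar>real (card (good_hypergraphs r n m)) / real (card (hypergraphs r n m)) - 1\<bar>
          \<le> (1 + 8 * C^2) * \<bar>(real r)^6 * (real m)\<^sup>2 / (real n)^3\<bar>"
proof -
  have rn2: "(real r)^2 \<le> real n" using rs by (metis of_nat_0_le_iff power_mono real_sqrt_pow2 real_sqrt_ge_zero)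
  have rpos: "real r > 0" using r3 by simp
  have npos: "real n > 0" using rn2 rpos by (smt (verit) zero_less_power)
  define x where "x = real n / (real r)^2"
  have x1: "x \<ge> 1" unfolding x_def using rn2 rpos by simp
  have mx: "real m \<le> C * ln x" using mC x1 unfolding x_def by simp
  have lnx: "ln x \<le> x" using ln_le_minus_one[of x] x1 by simp
  have mx2: "real m \<le> C * x" using mx lnx C by (smt (verit) mult_left_mono)
  have mm: "(real m)^2 \<le> 4 * C^2 * x"
  proof -
    have "(real m)^2 \<le> (C * ln x)^2" using mx by (simp add: power_mono)
    also have "\<dots> = C^2 * (ln x)^2" by (simp add: power_mult_distrib)
    also have "\<dots> \<le> C^2 * (4 * x)" using ln_sq_le[OF x1] by (simp add: mult_left_mono)
    finally show ?thesis by simp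
  qed
  have key: "(real r)^2 * (real m)^2 / real n \<le> 4 * C^2"
  proof -
    have "(real r)^2 * (real m)^2 \<le> (real r)^2 * (4 * C^2 * x)" using mm by (simp add: mult_left_mono)
    also have "\<dots> = 4 * C^2 * real n" unfolding x_def using rpos by simp
    finally show ?thesis using npos by (simp add: divide_le_eq)
  qed
  have rn: "r \<le> n"
  proof -
    have "real r \<le> (real r)^2" using rpos r3 by (simp add: power2_eq_square)
    then show ?thesis using rn2 by simp
  qed
  define N where "N = n choose r"
  have nr1: "real n / real r \<ge> 1" using rn rpos by simp
  have "real N \<ge> (real n / real r)^r" unfolding N_def using binomial_ge_n_over_k_pow_k[OF rn] by simp
  moreover have "(real n / real r)^r \<ge> (real n / real r)^2" using nr1 r3 by (intro power_increasing) auto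
  moreover have "(real n / real r)^2 = real n * x" unfolding x_def by (simp add: power2_eq_square)
  moreover have "real n * x \<ge> C * x" using nC x1 by (simp add: mult_right_mono)
  ultimately have mN: "real m \<le> real N" using mx2 by linarith
  then have mN': "m \<le> N" by simp
  have Npos: "0 < N" using mN' m1 by simp
  define a where "a = real (N choose m)"
  have apos: "a > 0" unfolding a_def using mN' by simp
  have ch: "card (hypergraphs r n m) = N choose m" unfolding N_def by (rule card_hyp)
  have fh: "finite (hypergraphs r n m)" using ch apos unfolding a_def by (metis card.infinite of_nat_0 less_irrefl)
  have gs: "good_hypergraphs r n m \<subseteq> hypergraphs r n m" unfolding good_hypergraphs_def by auto
  have cg: "real (card (good_hypergraphs r n m)) = a - real (card (hypergraphs r n m - good_hypergraphs r n m))"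
    using card_Diff_subset[OF finite_subset[OF gs fh] gs] card_mono[OF fh gs] ch unfolding a_def by simp
  have eq: "\<bar>real (card (good_hypergraphs r n m)) / real (card (hypergraphs r n m)) - 1\<bar>
      = real (card (hypergraphs r n m - good_hypergraphs r n m)) / a"
    using cg ch apos unfolding a_def by (simp add: field_simps)
  have bc: "real (card (hypergraphs r n m - good_hypergraphs r n m))
    \<le> (real r ^ 3 * (real r / real n)^3 * real m ^ 2 + real r ^ 4 * (real r / real n)^4 * real m ^ 3
        + real r ^ 4 * (real r / real n)^4 * real m ^ 4) * a"
    using bad_count[OF r3 rn] Npos unfolding N_def a_def by simp
  define B where "B = (real r)^6 * (real m)\<^sup>2 / (real n)^3"
  have B0: "B \<ge> 0" unfolding B_def by simp
  define t where "t = (real r)^2 * (real m)^2 / real n"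
  have t0: "t \<ge> 0" unfolding t_def by simp
  have tm: "(real r)^2 * real m / real n \<le> t" unfolding t_def using m1 npos
    by (intro divide_right_mono mult_left_mono) (auto simp: power2_eq_square)
  have Q: "real r ^ 3 * (real r / real n)^3 * real m ^ 2 + real r ^ 4 * (real r / real n)^4 * real m ^ 3
        + real r ^ 4 * (real r / real n)^4 * real m ^ 4
      = B * (1 + (real r)^2 * real m / real n + t)"
    unfolding B_def t_def using npos by (simp add: field_simps eval_nat_numeral)
  have "B * (1 + (real r)^2 * real m / real n + t) \<le> B * (1 + 8 * C^2)"
    using tm key B0 unfolding t_def by (intro mult_left_mono) auto
  then have "real (card (hypergraphs r n m - good_hypergraphs r n m)) / a \<le> B * (1 + 8 * C^2)"
    using bc Q apos by (simp add: divide_le_eq mult.commute order_trans)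
  then show ?thesis using eq B0 unfolding B_def by (simp add: mult.commute)
qed




theorem theorem8p1:
  fixes r m :: "nat \<Rightarrow> nat"
  assumes r3: "\<And>n. r n \<ge> 3"
    and r_small: "(\<lambda>n. real (r n)) \<in> o(\<lambda>n. sqrt (real n))"
    and m_pos: "\<And>n. m n \<ge> 1"
    and m_bound: "(\<lambda>n. real (m n)) \<in> O(\<lambda>n. ln (real n / (real (r n))\<^sup>2))"
  shows "(\<lambda>n. real (card (good_hypergraphs (r n) n (m n))) / real (card (hypergraphs (r n) n (m n))) - 1)
           \<in> O(\<lambda>n. (real (r n))^6 * (real (m n))\<^sup>2 / (real n)^3)"
proof -
  obtain C where C: "C > 0" and ev2: "eventually (\<lambda>n. norm (real (m n)) \<le> C * norm (ln (real n / (real (r n))\<^sup>2))) at_top"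
    using m_bound by (elim landau_o.bigE) auto
  have ev1: "eventually (\<lambda>n. norm (real (r n)) \<le> 1 * norm (sqrt (real n))) at_top"
    using landau_o.smallD[OF r_small, of 1] by simp
  have ev3: "eventually (\<lambda>n. real n \<ge> C) at_top"
    by (metis eventually_at_top_linorder nat_ceiling_le_eq of_nat_le_iff le_trans)
  show ?thesis
  proof (rule bigoI[where c = "1 + 8 * C^2"])
    show "eventually (\<lambda>n. norm (real (card (good_hypergraphs (r n) n (m n))) / real (card (hypergraphs (r n) n (m n))) - 1)
        \<le> (1 + 8 * C^2) * norm ((real (r n))^6 * (real (m n))\<^sup>2 / (real n)^3)) at_top"
      using ev1 ev2 ev3
    proof eventually_elim
      case (elim n)
      then show ?case using pointwise[OF r3 m_pos _ _ C, of n n] by simp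
    qed
  qed
qed


end
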